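(* Let $n$ be even. The expected runtime of the SD-(1+1) EA with parameter $R$, where $n+1\le R\le n^{O(1)}$, on $\mathrm{LeadingOnes}$ is $O(n^2)$.
   Context: $\mathrm{LeadingOnes}(x_1,\dots,x_n)=\sum_{i=1}^n\prod_{j=1}^i x_j$. The SD-(1+1) EA with parameter $R\ge1$ maximizing $f\colon\{0,1\}^n\to\mathbb{R}$ ($n$ even) works as follows: choose $x$ uniformly at random from $\{0,1\}^n$, set strength $r\gets 1$ and counter $u\gets0$. In each iteration: create $y$ from $x$ by flipping each bit independently with probability $r/n$; set $u\gets u+1$. If $f(y)>f(x)$, set $x\gets y$, $r\gets1$, $u\gets0$. Otherwise, if $f(y)=f(x)$ and $r=1$, set $x\gets y$; and (in the case $f(y)\le f(x)$) if $u>2(en/r)^r\ln(nR)$, set $r\gets\min\{r+1,n/2\}$ and $u\gets 0$. The runtime is the number of iterations until a global maximum is first created. *)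

theory Defs
  imports "HOL-Probability.Probability"
begin

text \<open>Bit strings of length n are represented as bool lists; bit x_i is xs ! (i-1).\<close>

definition LeadingOnes :: "bool list \<Rightarrow> nat" where
  "LeadingOnes xs = (\<Sum>i<length xs. \<Prod>j\<le>i. (if xs ! j then 1 else 0))"

fun mutate :: "real \<Rightarrow> bool list \<Rightarrow> bool list pmf" where
  "mutate p [] = return_pmf []"
| "mutate p (b # bs) =
     bind_pmf (bernoulli_pmf p) (\<lambda>c.
     bind_pmf (mutate p bs) (\<lambda>bs'. return_pmf ((if c then \<not> b else b) # bs')))"

definition optimal :: "(bool list \<Rightarrow> real) \<Rightarrow> nat \<Rightarrow> bool list \<Rightarrow> bool" where
  "optimal f n y \<longleftrightarrow> (\<forall>z. length z = n \<longrightarrow> f z \<le> f y)"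

text \<open>State: (current search point x, strength r, counter u, global optimum already created?).\<close>
type_synonym sd_state = "bool list \<times> nat \<times> nat \<times> bool"

definition sd_update ::
  "(bool list \<Rightarrow> real) \<Rightarrow> nat \<Rightarrow> real \<Rightarrow> bool list \<Rightarrow> nat \<Rightarrow> nat \<Rightarrow> bool list \<Rightarrow> sd_state" where
  "sd_update f n R x r u y =
     (let u' = u + 1; fd = optimal f n y in
      if f y > f x then (y, 1, 0, fd)
      else (let x' = (if f y = f x \<and> r = 1 then y else x) in
            if real u' > 2 * (exp 1 * real n / real r) ^ r * ln (real n * R)
            then (x', min (r + 1) (n div 2), 0, fd)
            else (x', r, u', fd)))"

definition sd_step :: "(bool list \<Rightarrow> real) \<Rightarrow> nat \<Rightarrow> real \<Rightarrow> sd_state \<Rightarrow> sd_state pmf" where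
  "sd_step f n R s = (case s of (x, r, u, fd) \<Rightarrow>
     if fd then return_pmf s
     else map_pmf (sd_update f n R x r u) (mutate (real r / real n) x))"

definition sd_init :: "(bool list \<Rightarrow> real) \<Rightarrow> nat \<Rightarrow> sd_state pmf" where
  "sd_init f n = map_pmf (\<lambda>x. (x, 1, 0, optimal f n x)) (pmf_of_set {xs. length xs = n})"

fun sd_state_after :: "(bool list \<Rightarrow> real) \<Rightarrow> nat \<Rightarrow> real \<Rightarrow> nat \<Rightarrow> sd_state pmf" where
  "sd_state_after f n R 0 = sd_init f n"
| "sd_state_after f n R (Suc t) = bind_pmf (sd_state_after f n R t) (sd_step f n R)"

text \<open>Expected runtime E[T] = sum over t of Pr[T > t], where T is the number of iterations
  until a global maximum is first created (T = 0 if the initial point is optimal).\<close>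
definition sd_expected_runtime :: "(bool list \<Rightarrow> real) \<Rightarrow> nat \<Rightarrow> real \<Rightarrow> ennreal" where
  "sd_expected_runtime f n R =
     (\<Sum>t. ennreal (measure_pmf.prob (sd_state_after f n R t) {s. \<not> snd (snd (snd s))}))"

end

theory Submission
  imports Defs
begin


lemma LO_Nil[simp]: "LeadingOnes [] = 0"
  by (simp add: LeadingOnes_def)

lemma LO_Cons[simp]: "LeadingOnes (b # bs) = (if b then Suc (LeadingOnes bs) else 0)"
proof -
  have "LeadingOnes (b # bs) = (\<Sum>i<Suc (length bs). \<Prod>j\<le>i. (if (b#bs) ! j then 1 else 0))"
    by (simp add: LeadingOnes_def)
  also have "\<dots> = (\<Prod>j\<le>0. (if (b#bs) ! j then 1 else 0)) + (\<Sum>i<length bs. \<Prod>j\<le>Suc i. (if (b#bs) ! j then 1 else 0))"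
    by (subst sum.lessThan_Suc_shift) simp
  also have "\<dots> = (if b then 1 else 0) + (\<Sum>i<length bs. (if b then 1 else 0) * (\<Prod>j\<le>i. (if bs ! j then 1 else 0)))"
    by (simp only: prod.atMost_Suc_shift) simp
  finally show ?thesis by (simp add: LeadingOnes_def sum_distrib_left[symmetric])
qed

lemma LO_le: "LeadingOnes xs \<le> length xs"
  by (induction xs) auto

lemma set_mutate: "y \<in> set_pmf (mutate p xs) \<Longrightarrow> length y = length xs"
  by (induction xs arbitrary: y) auto

lemma mutate_prob:
  assumes "0 \<le> p" "p \<le> 1" "LeadingOnes xs < length xs"
  shows "ennreal (p * (1-p) ^ LeadingOnes xs) \<le> emeasure (measure_pmf (mutate p xs)) {y. LeadingOnes xs < LeadingOnes y}"
  using assms(3)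
proof (induction xs)
  case Nil then show ?case by simp
next
  case (Cons b bs)
  show ?case
  proof (cases b)
    case False
    then have bF: "b = False" by simp
    have "emeasure (measure_pmf (mutate p (b#bs))) {y. LeadingOnes (b#bs) < LeadingOnes y}
       = (\<integral>\<^sup>+c. emeasure (measure_pmf (mutate p bs \<bind> (\<lambda>bs'. return_pmf ((if c then \<not> False else False) # bs')))) {y. 0 < LeadingOnes y} \<partial>bernoulli_pmf p)"
      unfolding bF by simp
    also have "\<dots> \<ge> ennreal p"
      using assms bF by (simp add: indicator_def)
    finally show ?thesis using False by simp
  next
    case True
    then have bT: "b = True" by simp
    have "emeasure (measure_pmf (mutate p (b#bs))) {y. LeadingOnes (b#bs) < LeadingOnes y}
       = (\<integral>\<^sup>+c. emeasure (measure_pmf (mutate p bs \<bind> (\<lambda>bs'. return_pmf ((if c then \<not> True else True) # bs')))) {y. Suc (LeadingOnes bs) < LeadingOnes y} \<partial>bernoulli_pmf p)"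
      unfolding bT by simp
    also have "\<dots> = emeasure (measure_pmf (mutate p bs \<bind> (\<lambda>bs'. return_pmf (False # bs')))) {y. Suc (LeadingOnes bs) < LeadingOnes y} * p
        + emeasure (measure_pmf (mutate p bs \<bind> (\<lambda>bs'. return_pmf (True # bs')))) {y. Suc (LeadingOnes bs) < LeadingOnes y} * (1-p)"
      using assms True by simp
    also have "\<dots> \<ge> emeasure (measure_pmf (mutate p bs)) {y. LeadingOnes bs < LeadingOnes y} * (1-p)"
    proof -
      have e: "(\<integral>\<^sup>+x. of_bool (LeadingOnes bs < LeadingOnes x) \<partial>measure_pmf (mutate p bs)) = emeasure (measure_pmf (mutate p bs)) {y. LeadingOnes bs < LeadingOnes y}"
        using nn_integral_indicator[of "{y. LeadingOnes bs < LeadingOnes y}" "measure_pmf (mutate p bs)"]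
        by (simp add: indicator_def of_bool_def)
      show ?thesis by (simp add: indicator_def e)
    qed
    finally have "emeasure (measure_pmf (mutate p bs)) {y. LeadingOnes bs < LeadingOnes y} * (1-p) \<le> emeasure (measure_pmf (mutate p (b#bs))) {y. LeadingOnes (b#bs) < LeadingOnes y}" .
    moreover have "ennreal (p * (1-p) ^ LeadingOnes bs) * (1-p) \<le> emeasure (measure_pmf (mutate p bs)) {y. LeadingOnes bs < LeadingOnes y} * (1-p)"
      using Cons True by (intro mult_right_mono) auto
    moreover have "ennreal (p * (1-p) ^ LeadingOnes (b#bs)) = ennreal (p * (1-p) ^ LeadingOnes bs) * (1-p)"
      using True assms by (simp add: ennreal_mult'[symmetric] mult_ac)
    ultimately show ?thesis by simp
  qed
qed



lemma ln_lower:
  fixes x :: real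
  assumes "0 \<le> x" "x \<le> 1/2"
  shows "- x - x^2 \<le> ln (1 - x)"
proof -
  let ?g = "\<lambda>t::real. ln (1 - t) + t + t^2"
  have "?g 0 \<le> ?g x"
  proof (rule DERIV_nonneg_imp_nondecreasing[OF assms(1)])
    fix t :: real assume t0: "0 \<le> t" "t \<le> x"
    then have t: "0 \<le> t \<and> t \<le> x" by simp
    have d: "(?g has_real_derivative (- 1 / (1 - t) + 1 + 2 * t)) (at t)"
      using t assms by (auto intro!: derivative_eq_intros)
    have e: "- 1 / (1 - t) + 1 + 2 * t = t * (1 - 2*t) / (1 - t)"
      using t assms by (simp add: field_simps)
    have "0 \<le> t * (1 - 2*t) / (1 - t)" using t assms by (intro divide_nonneg_pos mult_nonneg_nonneg) auto
    then show "\<exists>y. (?g has_real_derivative y) (at t) \<and> 0 \<le> y" using d e by (intro exI[of _ "- 1 / (1 - t) + 1 + 2 * t"]) simp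
  qed
  then show ?thesis by simp
qed

lemma exp_half_le_2: "exp (1/2::real) \<le> 2"
proof -
  have "exp (1/2::real) ^ 2 = exp 1" by (simp flip: exp_of_nat_mult)
  also have "\<dots> \<le> 2^2" using exp_le by simp
  finally show ?thesis by (rule power2_le_imp_le) simp
qed

lemma key:
  fixes n r :: nat
  assumes "1 \<le> r" "2 * r \<le> n"
  shows "1 \<le> 2 * (exp 1 * real n / real r) ^ r * (real r / real n) * (1 - real r / real n) ^ (n - 1)"
proof -
  define x where "x = real r / real n"
  define y where "y = real n / real r"
  have n0: "real n > 0" "real r > 0" using assms by auto
  have x0: "0 < x" "x \<le> 1/2" using assms n0 by (auto simp: x_def field_simps)
  have y2: "y \<ge> 2" using assms n0 by (auto simp: y_def field_simps)
  have xy: "x * y = 1" using n0 by (simp add: x_def y_def)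
  have "(1 - x) ^ n \<le> (1 - x) ^ (n - 1)"
    using x0 by (intro power_decreasing) auto
  have "(1 - x) ^ n = exp (real n * ln (1 - x))"
    using x0 by (subst ln_realpow[symmetric]) auto
  also have "\<dots> \<ge> exp (real n * (- x - x^2))"
    using ln_lower[of x] x0 by (intro exp_mono mult_left_mono) auto
  moreover have "real n * (- x - x^2) = - real r - real r * x"
    using n0 by (simp add: x_def power2_eq_square field_simps)
  ultimately have A: "exp (- real r - real r * x) \<le> (1 - x) ^ (n - 1)"
    using \<open>(1 - x) ^ n \<le> _\<close> by (metis exp_le_cancel_iff order_trans)
  have B: "(exp 1 * real n / real r) ^ r * (real r / real n) = exp (real r) * y ^ (r - 1)"
  proof -
    have "(exp 1 * real n / real r) ^ r = exp 1 ^ r * y ^ r" unfolding y_def by (simp add: power_mult_distrib[symmetric] times_divide_eq_right)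
    moreover have "y ^ r = y * y ^ (r - 1)" using assms by (simp add: power_eq_if)
    moreover have "exp 1 ^ r = exp (real r)" by (simp flip: exp_of_nat_mult)
    ultimately show ?thesis using n0 by (simp add: y_def)
  qed
  have C: "(2 * exp (-1/2)) ^ r \<le> 2 * exp (real r) * y ^ (r - 1) * exp (- real r - real r * x)"
  proof -
    have "exp (- real r - real r * x) \<ge> exp (- real r - real r / 2)"
      proof (intro exp_mono)
      have "real r * x \<le> real r * (1/2)" using x0 n0 by (intro mult_left_mono) auto
      then show "- real r - real r / 2 \<le> - real r - real r * x" by simp
    qed
    moreover have "y ^ (r - 1) \<ge> 2 ^ (r - 1)" using y2 by (intro power_mono) auto
    ultimately have "2 * exp (real r) * y ^ (r - 1) * exp (- real r - real r * x) \<ge> 2 * exp (real r) * 2 ^ (r - 1) * exp (- real r - real r / 2)"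
      using y2 by (intro mult_mono) auto
    moreover have "2 * exp (real r) * 2 ^ (r - 1) * exp (- real r - real r / 2) = (2 * exp (-1/2)) ^ r"
    proof -
      have "2 * (2::real) ^ (r - 1) = 2 ^ r" using assms by (simp add: power_eq_if)
      moreover have "exp (real r) * exp (- real r - real r / 2) = exp (-1/2) ^ r"
        by (simp add: exp_add[symmetric] exp_of_nat_mult[symmetric])
      ultimately show ?thesis by (simp add: power_mult_distrib mult_ac) (metis mult.assoc mult.commute)
    qed
    ultimately show ?thesis by linarith
  qed
  have "1 \<le> 2 * exp (-1/2 :: real)"
    using exp_half_le_2 by (simp add: exp_minus field_simps)
  then have "1 \<le> (2 * exp (-1/2::real)) ^ r" by (rule one_le_power)
  then have "1 \<le> 2 * exp (real r) * y ^ (r - 1) * exp (- real r - real r * x)" using C by linarith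
  also have "\<dots> \<le> 2 * exp (real r) * y ^ (r - 1) * (1 - x) ^ (n - 1)"
    using A y2 by (intro mult_left_mono) auto
  also have "\<dots> = 2 * (exp 1 * real n / real r) ^ r * (real r / real n) * (1 - real r / real n) ^ (n - 1)"
    using B by (simp add: x_def mult_ac)
  finally show ?thesis .
qed



definition TT :: "nat \<Rightarrow> real \<Rightarrow> nat \<Rightarrow> real" where
  "TT n R r = 2 * (exp 1 * real n / real r) ^ r * ln (real n * R)"
definition pr :: "nat \<Rightarrow> nat \<Rightarrow> real" where
  "pr n r = real r / real n * (1 - real r / real n) ^ (n - 1)"
definition nx :: "nat \<Rightarrow> nat \<Rightarrow> nat" where
  "nx n r = min (r + 1) (n div 2)"
definition XX :: "nat \<Rightarrow> real \<Rightarrow> nat \<Rightarrow> real" where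
  "XX n R r = 2 * (TT n R r + 1)"
definition WW :: "nat \<Rightarrow> real \<Rightarrow> nat \<Rightarrow> nat \<Rightarrow> real" where
  "WW n R r u = (1 - pr n r) powr (TT n R r - real u) * XX n R (nx n r)
      + (if r = 1 then 0 else TT n R r - real u + 1)"
definition AA :: "nat \<Rightarrow> real \<Rightarrow> real" where
  "AA n R = WW n R 1 0 + 2 * exp 1 * real n"

locale setting =
  fixes n :: nat and R :: real
  assumes n6: "6 \<le> n" and Rn: "real n + 1 \<le> R"
begin

lemma L_pos: "0 < ln (real n * R)"
proof -
  have n1: "1 \<le> real n" using n6 by simp
  have "1 < R" using n1 Rn by simp
  have "1 * 1 < real n * R" using n1 \<open>1 < R\<close> by (intro mult_le_less_imp_less) auto
  then have "1 < real n * R" by simp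
  then show ?thesis by simp
qed

lemma T_nonneg: "0 \<le> TT n R r"
  using L_pos by (simp add: TT_def)

lemma pr_bounds:
  assumes "1 \<le> r" "r \<le> n div 2"
  shows "0 < pr n r" "pr n r \<le> 1/2"
proof -
  have x: "real r / real n \<le> 1/2" "0 < real r / real n" using assms n6 by (auto simp: field_simps)
  have x1: "real r / real n \<le> 1" using x by linarith
  have le1: "(1 - real r / real n) ^ (n - 1) \<le> 1" using x x1 by (intro power_le_one) auto
  moreover have pp: "0 < (1 - real r / real n) ^ (n - 1)" using x(1) by (intro zero_less_power) linarith
  ultimately show "0 < pr n r" unfolding pr_def using x(2) pp by (intro mult_pos_pos)
  have "pr n r \<le> real r / real n * 1" unfolding pr_def
    using x le1 by (intro mult_left_mono) auto
  then show "pr n r \<le> 1/2" using x(1) by linarith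
qed

lemma pT:
  assumes "1 \<le> r" "r \<le> n div 2"
  shows "ln (real n * R) \<le> pr n r * TT n R r"
proof -
  have "1 \<le> 2 * (exp 1 * real n / real r) ^ r * (real r / real n) * (1 - real r / real n) ^ (n - 1)"
    using assms by (intro key) auto
  then have "1 * ln (real n * R) \<le> (2 * (exp 1 * real n / real r) ^ r * (real r / real n) * (1 - real r / real n) ^ (n - 1)) * ln (real n * R)"
    using L_pos by (intro mult_right_mono) auto
  then show ?thesis by (simp add: pr_def TT_def mult_ac)
qed

lemma pD: "1 \<le> pr n 1 * (2 * exp 1 * real n)"
proof -
  have "1 \<le> 2 * (exp 1 * real n / real 1) ^ 1 * (real 1 / real n) * (1 - real 1 / real n) ^ (n - 1)"
    using n6 by (intro key) auto
  then show ?thesis using n6 by (simp add: pr_def mult_ac)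
qed

lemma f_bound:
  assumes "1 \<le> r" "r \<le> n div 2"
  shows "(1 - pr n r) powr TT n R r \<le> 1 / (real n * R)"
proof -
  have p: "0 < pr n r" "pr n r \<le> 1/2" using pr_bounds assms by auto
  have "(1 - pr n r) powr TT n R r \<le> exp (- pr n r) powr TT n R r"
    using p T_nonneg exp_ge_add_one_self[of "- pr n r"] by (intro powr_mono2) auto
  also have "\<dots> = exp (- (pr n r * TT n R r))" by (simp add: powr_def)
  also have "\<dots> \<le> exp (- ln (real n * R))" using pT[OF assms] by simp
  also have "\<dots> = 1 / (real n * R)" using L_pos n6 Rn
    by (simp add: exp_minus inverse_eq_divide)
  finally show ?thesis .
qed

lemma T_succ:
  assumes "1 \<le> r"
  shows "TT n R (r + 1) \<le> exp 1 * real n * TT n R r"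
proof -
  have n0: "real n > 0" "real r > 0" using n6 assms by auto
  have "(exp 1 * real n / real (r+1)) ^ (r+1) = (exp 1 * real n / real (r+1)) * (exp 1 * real n / real (r+1)) ^ r"
    by simp
  also have "\<dots> \<le> (exp 1 * real n) * (exp 1 * real n / real r) ^ r"
  proof (intro mult_mono power_mono)
    show "exp 1 * real n / real (r + 1) \<le> exp 1 * real n" using n0 by (simp add: field_simps)
    show "exp 1 * real n / real (r + 1) \<le> exp 1 * real n / real r" using n0
      by (intro divide_left_mono) auto
  qed (use n0 in auto)
  finally have "(exp 1 * real n / real (r+1)) ^ (r+1) \<le> (exp 1 * real n) * (exp 1 * real n / real r) ^ r" .
  then have "2 * (exp 1 * real n / real (r+1)) ^ (r+1) * ln (real n * R) \<le> 2 * ((exp 1 * real n) * (exp 1 * real n / real r) ^ r) * ln (real n * R)"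
    using L_pos by (intro mult_right_mono) auto
  then show ?thesis by (simp add: TT_def mult_ac)
qed

lemma T_nx:
  assumes "1 \<le> r" "r \<le> n div 2"
  shows "TT n R (nx n r) \<le> exp 1 * real n * TT n R r"
proof (cases "r + 1 \<le> n div 2")
  case True
  then show ?thesis using T_succ[OF assms(1)] by (simp add: nx_def)
next
  case False
  then have "nx n r = r" using assms by (simp add: nx_def)
  moreover have "1 * TT n R r \<le> exp 1 * real n * TT n R r"
  proof (intro mult_right_mono T_nonneg)
    show "1 \<le> exp 1 * real n" using n6 mult_mono[of 1 "exp 1" 1 "real n"] by simp
  qed
  ultimately show ?thesis by simp
qed

lemma nx_bounds:
  assumes "1 \<le> r" "r \<le> n div 2"
  shows "2 \<le> nx n r" "nx n r \<le> n div 2" "1 \<le> nx n r"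
  using assms n6 by (auto simp: nx_def)

lemma nR: "6 * real n \<le> real n * R" "2 \<le> real n * R"
proof -
  have "6 \<le> R" using n6 Rn by simp
  then show "6 * real n \<le> real n * R" using mult_left_mono[of 6 R "real n"] by (simp add: mult.commute)
  then show "2 \<le> real n * R" using n6 by linarith
qed

lemma X_nonneg: "0 \<le> XX n R r"
  using T_nonneg by (simp add: XX_def)

lemma W0_le_X:
  assumes "2 \<le> r" "r \<le> n div 2"
  shows "WW n R r 0 \<le> XX n R r"
proof -
  let ?f = "(1 - pr n r) powr TT n R r"
  have f: "?f \<le> 1 / (real n * R)" using f_bound assms by auto
  have Xn: "XX n R (nx n r) \<le> 2 * (exp 1 * real n * TT n R r + 1)"
    using T_nx[of r] assms by (simp add: XX_def)
  have "?f * XX n R (nx n r) \<le> 1 / (real n * R) * (2 * (exp 1 * real n * TT n R r + 1))"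
    using f Xn X_nonneg nR by (intro mult_mono) auto
  also have "\<dots> \<le> TT n R r + 1"
  proof -
    have "exp 1 * real n * TT n R r \<le> 3 * real n * TT n R r"
      using exp_le T_nonneg by (intro mult_right_mono) auto
    then have "2 * (exp 1 * real n * TT n R r + 1) \<le> (TT n R r + 1) * (real n * R)"
    proof -
      have "6 * real n * TT n R r \<le> (real n * R) * TT n R r"
        using mult_right_mono[OF nR(1) T_nonneg] .
      moreover have "(TT n R r + 1) * (real n * R) = (real n * R) * TT n R r + real n * R"
        by (simp add: algebra_simps)
      moreover have "exp 1 * real n * TT n R r \<le> 3 * (real n * TT n R r)"
        using \<open>exp 1 * real n * TT n R r \<le> 3 * real n * TT n R r\<close> by (simp add: mult_ac)
      ultimately show ?thesis using nR(2) by (simp add: mult_ac)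
    qed
    then show ?thesis using nR by (simp add: field_simps)
  qed
  finally show ?thesis using assms by (simp add: WW_def XX_def)
qed

lemma W_nonneg:
  assumes "1 \<le> r" "r \<le> n div 2" "real u \<le> TT n R r"
  shows "0 \<le> WW n R r u"
  using assms X_nonneg by (auto simp: WW_def intro!: add_nonneg_nonneg mult_nonneg_nonneg)

lemma A_nonneg: "0 \<le> AA n R"
  using W_nonneg[of 1 0] n6 T_nonneg by (auto simp: AA_def intro!: add_nonneg_nonneg)

lemma drift_real:
  assumes r: "1 \<le> r" "r \<le> n div 2" and u: "real u \<le> TT n R r"
  defines "Wn \<equiv> (if TT n R r < real (u + 1) then WW n R (nx n r) 0 else WW n R r (u + 1))"
  shows "Wn - pr n r * (2 * exp 1 * real n + Wn) + 1 \<le> WW n R r u" "0 \<le> Wn"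
proof -
  define p where "p = pr n r"
  define F where "F = 1 - p"
  define T where "T = TT n R r"
  define X' where "X' = XX n R (nx n r)"
  have p: "0 < p" "p \<le> 1/2" using pr_bounds[OF r] by (auto simp: p_def)
  have F: "0 < F" "F \<le> 1" using p by (auto simp: F_def)
  have X': "0 \<le> X'" using X_nonneg by (simp add: X'_def)
  have nxb: "2 \<le> nx n r" "nx n r \<le> n div 2" "1 \<le> nx n r" using nx_bounds[OF r] by auto
  have W0: "WW n R (nx n r) 0 \<le> X'" using W0_le_X[OF nxb(1,2)] by (simp add: X'_def)
  have W0n: "0 \<le> WW n R (nx n r) 0" using W_nonneg[OF nxb(3,2)] T_nonneg by auto
  have Wnn: "0 \<le> Wn"
    using W0n W_nonneg[OF r, of "u+1"] by (auto simp: Wn_def)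
  then show "0 \<le> Wn" .
  have pD: "1 \<le> pr n 1 * (2 * exp 1 * real n)" by (rule pD)
  have Wu: "WW n R r u = F powr (T - real u) * X' + (if r = 1 then 0 else T - real u + 1)"
    by (simp add: WW_def F_def p_def T_def X'_def)
  have key1: "F * F powr (T - real (u+1)) = F powr (T - real u)"
  proof -
    have "F powr (T - real (u+1) + 1) = F powr (T - real (u+1)) * F powr 1" by (rule powr_add)
    then show ?thesis using F by (simp add: algebra_simps)
  qed
  have LHS: "Wn - pr n r * (2 * exp 1 * real n + Wn) + 1 \<le> F * Wn + (if r = 1 then 0 else 1)"
  proof (cases "r = 1")
    case True
    then have "1 \<le> p * (2 * exp 1 * real n)" using pD by (simp add: p_def)
    then show ?thesis using True by (simp add: F_def p_def algebra_simps)
  next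
    case False
    have "0 \<le> p * (2 * exp 1 * real n)" using p by simp
    then show ?thesis using False by (simp add: F_def p_def algebra_simps)
  qed
  show "Wn - pr n r * (2 * exp 1 * real n + Wn) + 1 \<le> WW n R r u"
  proof (cases "T < real (u + 1)")
    case True
    then have Wn: "Wn = WW n R (nx n r) 0" by (simp add: Wn_def T_def)
    have "F powr 1 \<le> F powr (T - real u)"
      using True F u by (intro powr_mono') (auto simp: T_def)
    then have Fle: "F \<le> F powr (T - real u)" using F by simp
    have "F * Wn \<le> F * X'" using W0 F Wn by (intro mult_left_mono) auto
    also have "\<dots> \<le> F powr (T - real u) * X'" using Fle X' by (intro mult_right_mono)
    finally have "F * Wn \<le> F powr (T - real u) * X'" .
    moreover have "0 \<le> T - real u" using u by (simp add: T_def)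
    ultimately show ?thesis using LHS Wu by (auto split: if_splits)
  next
    case False
    then have Wn: "Wn = F powr (T - real (u+1)) * X' + (if r = 1 then 0 else T - real (u+1) + 1)"
      by (simp add: Wn_def T_def WW_def F_def p_def X'_def)
    have Tu: "0 \<le> T - real u" using u by (simp add: T_def)
    have "F * (T - real u) \<le> 1 * (T - real u)" using F Tu by (intro mult_right_mono) auto
    then have "F * Wn \<le> F powr (T - real u) * X' + (if r = 1 then 0 else T - real u)"
    proof -
      have k2: "F * (F powr (T - real (u+1)) * X') = F powr (T - real u) * X'"
        using key1 by (metis mult.assoc)
      have "F * Wn = F * (F powr (T - real (u+1)) * X') + (if r = 1 then 0 else F * (T - real u))"
        unfolding Wn by (simp add: distrib_left)
      then show ?thesis using k2 \<open>F * (T - real u) \<le> 1 * (T - real u)\<close> by (smt (verit))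
    qed
    then show ?thesis using LHS Wu by (auto split: if_splits)
  qed
qed

end


abbreviation LOf :: "bool list \<Rightarrow> real" where "LOf \<equiv> (\<lambda>x. real (LeadingOnes x))"

definition valid :: "nat \<Rightarrow> real \<Rightarrow> bool list \<Rightarrow> nat \<Rightarrow> nat \<Rightarrow> bool" where
  "valid n R x r u \<longleftrightarrow> length x = n \<and> LeadingOnes x < n \<and> 1 \<le> r \<and> r \<le> n div 2 \<and> real u \<le> TT n R r"

definition Phi :: "nat \<Rightarrow> real \<Rightarrow> sd_state \<Rightarrow> ennreal" where
  "Phi n R s = (case s of (x, r, u, fd) \<Rightarrow> if fd then 0 else
      if valid n R x r u then ennreal (AA n R * (real n - real (LeadingOnes x)) + WW n R r u) else \<infinity>)"

lemma LO_replicate: "LeadingOnes (replicate m True) = m"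
  by (induction m) auto

lemma opt_iff: "length y = n \<Longrightarrow> optimal LOf n y \<longleftrightarrow> LeadingOnes y = n"
proof
  assume l: "length y = n" and o: "optimal LOf n y"
  have "real (LeadingOnes (replicate n True)) \<le> real (LeadingOnes y)"
    using o unfolding optimal_def by (metis length_replicate)
  then have "n \<le> LeadingOnes y" by (simp add: LO_replicate)
  then show "LeadingOnes y = n" using LO_le[of y] l by simp
next
  assume l: "length y = n" and e: "LeadingOnes y = n"
  show "optimal LOf n y" unfolding optimal_def of_nat_le_iff using e LO_le by metis
qed

context setting begin

lemma upd_eq:
  "sd_update LOf n R x r u y =
    (if LeadingOnes x < LeadingOnes y then (y, 1, 0, optimal LOf n y)
     else if TT n R r < real (u+1) then ((if LeadingOnes y = LeadingOnes x \<and> r = 1 then y else x), nx n r, 0, optimal LOf n y)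
     else ((if LeadingOnes y = LeadingOnes x \<and> r = 1 then y else x), r, u + 1, optimal LOf n y))"
  by (simp add: sd_update_def Let_def TT_def nx_def)

lemma drift:
  assumes V: "valid n R x r u"
  shows "(\<integral>\<^sup>+s. Phi n R s \<partial>sd_step LOf n R (x, r, u, False)) + 1 \<le> Phi n R (x, r, u, False)"
proof -
  have lx: "length x = n" and kx: "LeadingOnes x < n" and r: "1 \<le> r" "r \<le> n div 2" and u: "real u \<le> TT n R r"
    using V by (auto simp: valid_def)
  define k where "k = LeadingOnes x"
  define Wn where "Wn = (if TT n R r < real (u + 1) then WW n R (nx n r) 0 else WW n R r (u + 1))"
  define A where "A = AA n R"
  define a where "a = A * (real n - real k - 1) + WW n R 1 0"
  define b where "b = A * (real n - real k) + Wn"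
  define M where "M = mutate (real r / real n) x"
  define S where "S = {y. k < LeadingOnes y}"
  have DR: "Wn - pr n r * (2 * exp 1 * real n + Wn) + 1 \<le> WW n R r u" "0 \<le> Wn"
    using drift_real[OF r u] by (simp_all add: Wn_def)
  have A0: "0 \<le> A" using A_nonneg by (simp add: A_def)
  have W10: "0 \<le> WW n R 1 0" using W_nonneg[of 1 0] n6 T_nonneg by auto
  have kn: "real k + 1 \<le> real n" using kx by (simp add: k_def)
  have a0: "0 \<le> a" using A0 W10 kn by (simp add: a_def)
  have b0: "0 \<le> b" using A0 DR kn by (simp add: b_def)
  have ba: "b - a = 2 * exp 1 * real n + Wn"
    by (simp add: a_def b_def A_def AA_def algebra_simps)
  have pt: "Phi n R (sd_update LOf n R x r u y) \<le> ennreal (if y \<in> S then a else b)" if y: "y \<in> set_pmf M" for y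
  proof -
    have ly: "length y = n" using set_mutate y lx by (auto simp: M_def)
    show ?thesis
    proof (cases "k < LeadingOnes y")
      case True
      show ?thesis
      proof (cases "optimal LOf n y")
        case False
        then have "LeadingOnes y < n" using opt_iff[OF ly] LO_le[of y] ly by auto
        then have "valid n R y 1 0" using ly n6 T_nonneg by (auto simp: valid_def)
        moreover have "A * (real n - real (LeadingOnes y)) \<le> A * (real n - real k - 1)"
          using True A0 by (intro mult_left_mono) auto
        ultimately show ?thesis using True False
          by (simp add: upd_eq k_def[symmetric] S_def Phi_def a_def A_def) (intro ennreal_leI; linarith)
      qed (use True in \<open>simp add: upd_eq k_def[symmetric] Phi_def\<close>)
    next
      case False
      define x' where "x' = (if LeadingOnes y = LeadingOnes x \<and> r = 1 then y else x)"
      have lx': "length x' = n" "LeadingOnes x' = k" using lx ly by (auto simp: x'_def k_def)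
      show ?thesis
      proof (cases "optimal LOf n y")
        case opt: False
        show ?thesis
        proof (cases "TT n R r < real (u+1)")
          case True
          have "valid n R x' (nx n r) 0" using lx' kx nx_bounds[OF r] T_nonneg by (auto simp: valid_def k_def)
          moreover have "sd_update LOf n R x r u y = (x', nx n r, 0, optimal LOf n y)"
            using True False by (simp add: upd_eq x'_def k_def)
          ultimately show ?thesis using True False opt lx'
            by (simp add: S_def Phi_def b_def A_def Wn_def)
        next
          case nT: False
          have "valid n R x' r (u+1)" using lx' kx r nT by (auto simp: valid_def k_def)
          moreover have "sd_update LOf n R x r u y = (x', r, u + 1, optimal LOf n y)"
            using nT False by (simp add: upd_eq x'_def k_def)
          ultimately show ?thesis using nT False opt lx'
            by (simp add: S_def Phi_def b_def A_def Wn_def)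
        qed
      qed (use False in \<open>simp add: upd_eq k_def[symmetric] Phi_def\<close>)
    qed
  qed
  have "(\<integral>\<^sup>+s. Phi n R s \<partial>sd_step LOf n R (x, r, u, False)) = (\<integral>\<^sup>+y. Phi n R (sd_update LOf n R x r u y) \<partial>M)"
    by (simp add: sd_step_def M_def)
  also have "\<dots> \<le> (\<integral>\<^sup>+y. ennreal a * indicator S y + ennreal b * indicator (- S) y \<partial>M)"
    by (intro nn_integral_mono_AE AE_pmfI order.trans[OF pt]) (auto simp: indicator_def)
  also have "\<dots> = ennreal a * emeasure M S + ennreal b * emeasure M (- S)"
    by (subst nn_integral_add) (auto simp: nn_integral_cmult)
  finally have I1: "(\<integral>\<^sup>+s. Phi n R s \<partial>sd_step LOf n R (x, r, u, False)) \<le> ennreal a * emeasure M S + ennreal b * emeasure M (- S)" .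
  define P where "P = measure_pmf.prob M S"
  have eS: "emeasure M S = ennreal P" by (simp add: P_def measure_pmf.emeasure_eq_measure)
  have eC: "emeasure M (- S) = ennreal (1 - P)"
    using measure_pmf.prob_compl[of S M] by (simp add: P_def measure_pmf.emeasure_eq_measure Compl_eq_Diff_UNIV)
  have P1: "P \<le> 1" by (simp add: P_def)
  have Pp: "pr n r \<le> P"
  proof -
    define q where "q = real r / real n"
    have q: "0 \<le> q" "q \<le> 1" using r n6 by (auto simp: q_def field_simps)
    have "ennreal (q * (1 - q) ^ k) \<le> emeasure M S"
      using mutate_prob[OF q, of x] kx lx by (simp add: M_def S_def k_def q_def)
    then have "q * (1 - q) ^ k \<le> P" using eS by (simp add: P_def)
    moreover have "(1 - q) ^ (n - 1) \<le> (1 - q) ^ k" using q kx by (intro power_decreasing) (auto simp: k_def)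
    then have "pr n r \<le> q * (1 - q) ^ k" using q by (simp add: pr_def q_def[symmetric] mult_left_mono)
    ultimately show ?thesis by simp
  qed
  have real_ineq: "a * P + b * (1 - P) + 1 \<le> A * (real n - real k) + WW n R r u"
  proof -
    have "a * P + b * (1 - P) + 1 = b - P * (b - a) + 1" by (simp add: algebra_simps)
    also have "\<dots> \<le> b - pr n r * (b - a) + 1"
      using Pp ba DR by (intro add_right_mono diff_left_mono mult_right_mono) auto
    also have "\<dots> \<le> A * (real n - real k) + WW n R r u"
      unfolding ba using DR by (simp add: b_def)
    finally show ?thesis .
  qed
  have P0: "0 \<le> P" by (simp add: P_def)
  have E: "ennreal a * emeasure M S + ennreal b * emeasure M (- S) + 1 = ennreal (a * P + b * (1 - P) + 1)"
  proof -
    have "ennreal (a * P + b * (1 - P) + 1) = ennreal (a * P) + ennreal (b * (1 - P)) + ennreal 1"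
      using a0 b0 P0 P1 by (simp add: ennreal_plus)
    also have "\<dots> = ennreal a * ennreal P + ennreal b * ennreal (1 - P) + 1"
      using a0 b0 P0 P1 by (simp add: ennreal_mult)
    finally show ?thesis by (simp add: eS eC)
  qed
  have "(\<integral>\<^sup>+s. Phi n R s \<partial>sd_step LOf n R (x, r, u, False)) + 1 \<le> ennreal (a * P + b * (1 - P) + 1)"
    using add_right_mono[OF I1, of 1] E by simp
  also have "\<dots> \<le> Phi n R (x, r, u, False)"
    using real_ineq V by (simp add: Phi_def A_def k_def ennreal_leI)
  finally show ?thesis .
qed

end


abbreviation notdone :: "sd_state set" where "notdone \<equiv> {s. \<not> snd (snd (snd s))}"

context setting begin

lemma step_bound:
  "(\<integral>\<^sup>+s'. Phi n R s' \<partial>sd_step LOf n R s) + indicator notdone s \<le> Phi n R s"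
proof -
  obtain x r u fd where s: "s = (x, r, u, fd)" by (cases s) auto
  show ?thesis
  proof (cases fd)
    case True
    then show ?thesis by (simp add: s sd_step_def Phi_def)
  next
    case False
    show ?thesis
    proof (cases "valid n R x r u")
      case True
      then show ?thesis using drift[OF True] False by (simp add: s)
    next
      case nv: False
      then show ?thesis using False by (simp add: s Phi_def)
    qed
  qed
qed

lemma sum_bound:
  "(\<integral>\<^sup>+s. Phi n R s \<partial>sd_state_after LOf n R t)
     + (\<Sum>j<t. ennreal (measure_pmf.prob (sd_state_after LOf n R j) notdone))
   \<le> (\<integral>\<^sup>+s. Phi n R s \<partial>sd_state_after LOf n R 0)"
proof (induction t)
  case 0
  then show ?case by simp
next
  case (Suc t)
  let ?\<mu> = "sd_state_after LOf n R t"
  have "(\<integral>\<^sup>+s. Phi n R s \<partial>sd_state_after LOf n R (Suc t)) + ennreal (measure_pmf.prob ?\<mu> notdone)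
      = (\<integral>\<^sup>+s. (\<integral>\<^sup>+s'. Phi n R s' \<partial>sd_step LOf n R s) \<partial>?\<mu>) + (\<integral>\<^sup>+s. indicator notdone s \<partial>?\<mu>)"
    by (simp add: measure_pmf.emeasure_eq_measure)
  also have "\<dots> = (\<integral>\<^sup>+s. (\<integral>\<^sup>+s'. Phi n R s' \<partial>sd_step LOf n R s) + indicator notdone s \<partial>?\<mu>)"
    by (subst nn_integral_add) auto
  also have "\<dots> \<le> (\<integral>\<^sup>+s. Phi n R s \<partial>?\<mu>)"
    by (intro nn_integral_mono step_bound)
  finally have I: "(\<integral>\<^sup>+s. Phi n R s \<partial>sd_state_after LOf n R (Suc t)) + ennreal (measure_pmf.prob ?\<mu> notdone) \<le> (\<integral>\<^sup>+s. Phi n R s \<partial>?\<mu>)" .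
  have "(\<integral>\<^sup>+s. Phi n R s \<partial>sd_state_after LOf n R (Suc t))
     + (\<Sum>j<Suc t. ennreal (measure_pmf.prob (sd_state_after LOf n R j) notdone))
     = ((\<integral>\<^sup>+s. Phi n R s \<partial>sd_state_after LOf n R (Suc t)) + ennreal (measure_pmf.prob ?\<mu> notdone))
       + (\<Sum>j<t. ennreal (measure_pmf.prob (sd_state_after LOf n R j) notdone))"
    by (simp add: ac_simps)
  also have "\<dots> \<le> (\<integral>\<^sup>+s. Phi n R s \<partial>?\<mu>) + (\<Sum>j<t. ennreal (measure_pmf.prob (sd_state_after LOf n R j) notdone))"
    using I by (rule add_right_mono)
  also have "\<dots> \<le> (\<integral>\<^sup>+s. Phi n R s \<partial>sd_state_after LOf n R 0)" by (rule Suc.IH)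
  finally show ?case .
qed

lemma runtime_le_init:
  "sd_expected_runtime LOf n R \<le> (\<integral>\<^sup>+s. Phi n R s \<partial>sd_state_after LOf n R 0)"
  unfolding sd_expected_runtime_def
proof (rule suminf_le_const)
  fix t
  show "(\<Sum>j<t. ennreal (measure_pmf.prob (sd_state_after LOf n R j) notdone)) \<le> (\<integral>\<^sup>+s. Phi n R s \<partial>sd_state_after LOf n R 0)"
    using order.trans[OF add_increasing[OF zero_le order.refl] sum_bound[of t]] .
qed auto

lemma init_bound:
  "(\<integral>\<^sup>+s. Phi n R s \<partial>sd_state_after LOf n R 0) \<le> ennreal (AA n R * real n + WW n R 1 0)"
proof -
  define S where "S = {xs :: bool list. length xs = n}"
  have fin: "finite S" using finite_lists_length_eq[of "UNIV :: bool set" n] by (simp add: S_def)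
  have ne: "S \<noteq> {}" by (auto simp: S_def intro!: exI[of _ "replicate n True"])
  have A0: "0 \<le> AA n R" by (rule A_nonneg)
  have W10: "0 \<le> WW n R 1 0" using W_nonneg[of 1 0] n6 T_nonneg by auto
  have "(\<integral>\<^sup>+s. Phi n R s \<partial>sd_state_after LOf n R 0) \<le> (\<integral>\<^sup>+s. ennreal (AA n R * real n + WW n R 1 0) \<partial>sd_state_after LOf n R 0)"
  proof (intro nn_integral_mono_AE AE_pmfI)
    fix s assume "s \<in> set_pmf (sd_state_after LOf n R 0)"
    moreover have "set_pmf (sd_state_after LOf n R 0) = (\<lambda>x. (x, 1, 0, optimal LOf n x)) ` S"
      using fin ne by (simp add: sd_init_def S_def[symmetric])
    ultimately obtain x where x: "x \<in> S" and s: "s = (x, 1, 0, optimal LOf n x)"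
      by auto
    show "Phi n R s \<le> ennreal (AA n R * real n + WW n R 1 0)"
    proof (cases "optimal LOf n x")
      case False
      have lx: "length x = n" using x by (simp add: S_def)
      then have "LeadingOnes x < n" using False opt_iff[OF lx] LO_le[of x] by auto
      then have "valid n R x 1 0" using lx n6 T_nonneg by (auto simp: valid_def)
      moreover have "AA n R * (real n - real (LeadingOnes x)) \<le> AA n R * real n"
        using A0 by (intro mult_left_mono) auto
      ultimately show ?thesis using False by (simp add: s Phi_def ennreal_leI)
    qed (simp add: s Phi_def)
  qed
  also have "\<dots> = ennreal (AA n R * real n + WW n R 1 0)" by simp
  finally show ?thesis .
qed

lemma final_num: "AA n R * real n + WW n R 1 0 \<le> 30 * real n ^ 2"
proof -
  define L where "L = ln (real n * R)"
  have n0: "6 \<le> real n" using n6 by simp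
  have R1: "1 < R" using Rn n0 by simp
  have nx1: "nx n (Suc 0) = 2" using n6 by (simp add: nx_def)
  have L2: "L \<le> 2 * R"
  proof -
    have "real n * R \<le> R * R" using Rn R1 by (intro mult_right_mono) auto
    moreover have "0 < real n * R" "0 < R * R" using nR R1 by auto
    ultimately have "L \<le> ln (R * R)" unfolding L_def by (subst ln_le_cancel_iff) auto
    also have "\<dots> = 2 * ln R" using R1 by (simp add: ln_mult)
    also have "\<dots> \<le> 2 * R" using ln_le_minus_one[of R] R1 by simp
    finally show ?thesis .
  qed
  have X2: "XX n R 2 = exp 1 ^ 2 * real n ^ 2 * L + 2"
    by (simp add: XX_def TT_def L_def power2_eq_square field_simps)
  have f1: "(1 - pr n 1) powr TT n R 1 \<le> 1 / (real n * R)" using f_bound[of 1] n6 by auto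
  have W10: "WW n R 1 0 = (1 - pr n 1) powr TT n R 1 * XX n R 2" by (simp add: WW_def nx1)
  have "WW n R 1 0 \<le> 1 / (real n * R) * XX n R 2"
    unfolding W10 using f1 X_nonneg by (intro mult_right_mono) auto
  also have "\<dots> = exp 1 ^ 2 * real n * (L / R) + 2 / (real n * R)"
    using n0 R1 by (simp add: X2 field_simps power2_eq_square)
  also have "\<dots> \<le> 9 * real n * 2 + 1"
  proof -
    have "exp 1 ^ 2 \<le> (3::real) ^ 2" using exp_le by (intro power_mono) auto
    moreover have "L / R \<le> 2" using L2 R1 by (simp add: field_simps)
    moreover have "L / R \<ge> 0" using L_pos R1 by (simp add: L_def)
    ultimately have "exp 1 ^ 2 * real n * (L / R) \<le> 9 * real n * 2"
      using n0 by (intro mult_mono) auto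
    moreover have "2 / (real n * R) \<le> 1" using nR by simp
    ultimately show ?thesis by linarith
  qed
  finally have W: "WW n R 1 0 \<le> 18 * real n + 1" by simp
  have A: "AA n R \<le> 24 * real n + 1"
  proof -
    have "exp 1 * real n \<le> 3 * real n" using exp_le n0 by (intro mult_right_mono) auto
    then show ?thesis using W by (simp add: AA_def)
  qed
  have "AA n R * real n \<le> (24 * real n + 1) * real n" using A n0 by (intro mult_right_mono) auto
  moreover have "36 * real n \<le> 6 * (real n * real n)" using n0 by (simp add: mult_right_mono)
  moreover have "(24 * real n + 1) * real n = 24 * (real n * real n) + real n" by (simp add: algebra_simps)
  ultimately show ?thesis using W n0 unfolding power2_eq_square by linarith
qed

end

theorem mainTheorem6:
  fixes c :: real
  shows "\<exists>C N. \<forall>(n::nat) (R::real). n \<ge> N \<and> even n \<and> real n + 1 \<le> R \<and> R \<le> real n powr c \<longrightarrow>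
           sd_expected_runtime (\<lambda>x. real (LeadingOnes x)) n R \<le> ennreal (C * real n ^ 2)"
proof (intro exI allI impI)
  fix n :: nat and R :: real
  assume h: "6 \<le> n \<and> even n \<and> real n + 1 \<le> R \<and> R \<le> real n powr c"
  interpret setting n R using h by unfold_locales auto
  have "sd_expected_runtime LOf n R \<le> ennreal (AA n R * real n + WW n R 1 0)"
    using runtime_le_init init_bound by (rule order.trans)
  also have "\<dots> \<le> ennreal (30 * real n ^ 2)" using final_num by (rule ennreal_leI)
  finally show "sd_expected_runtime (\<lambda>x. real (LeadingOnes x)) n R \<le> ennreal (30 * real n ^ 2)" .
qed


end
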